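(* Let $p$ be a prime with $p\equiv\pm1\pmod 8$, let $\mathcal{D}_i,\mathcal{E}_i$ ($i=1,2$) be the quadratic residue codes of length $p$ over $R$ defined below, let $G_i$ be a generator matrix of $\mathcal{E}_i$, and let $\widehat{\mathcal{D}}_i,\widetilde{\mathcal{D}}_i$ be the extended codes of length $p+1$ defined below. Then: (i) if $p\equiv-1\pmod 8$, then $\widehat{\mathcal{D}}_i$ and $\widetilde{\mathcal{D}}_i$ are Euclidean self-dual for $i=1,2$; (ii) if $p\equiv1\pmod 8$, then $\widehat{\mathcal{D}}_1^\perp=\widetilde{\mathcal{D}}_2$ and $\widehat{\mathcal{D}}_2^\perp=\widetilde{\mathcal{D}}_1$.
   Context: $R=\mathbb{Z}_4[v]/(v^2-v)$, $R_p=R[X]/(X^p-1)$, vectors of $R^p$ identified with elements of $R_p$; $(f)$ denotes the ideal (cyclic code) generated by $f$. $\mathcal{Q}_p$ = nonzero quadratic residues mod $p$, $\mathcal{N}_p$ = quadratic non-residues; $Q(X)=\sum_{i\in\mathcal{Q}_p}X^i$, $N(X)=\sum_{i\in\mathcal{N}_p}X^i$. Case I ($p\equiv-1\pmod 8$, $p+1=8r$): if $r$ odd, $\mathcal{D}_1=(v(Q+2N)+(1-v)(N+2Q))$, $\mathcal{D}_2=(v(N+2Q)+(1-v)(Q+2N))$, $\mathcal{E}_1=(v(1-N+2Q)+(1-v)(1-Q+2N))$, $\mathcal{E}_2=(v(1-Q+2N)+(1-v)(1-N+2Q))$; if $r$ even, $\mathcal{D}_1=(-vQ-(1-v)N)$,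 $\mathcal{D}_2=(-vN-(1-v)Q)$, $\mathcal{E}_1=(v(1+N)+(1-v)(1+Q))$, $\mathcal{E}_2=(v(1+Q)+(1-v)(1+N))$. Case II ($p\equiv1\pmod 8$, $p-1=8r$): if $r$ odd, $\mathcal{D}_1=(v(1-N+2Q)+(1-v)(1-Q+2N))$, $\mathcal{D}_2=(v(1-Q+2N)+(1-v)(1-N+2Q))$, $\mathcal{E}_1=(v(Q+2N)+(1-v)(N+2Q))$, $\mathcal{E}_2=(v(N+2Q)+(1-v)(Q+2N))$; if $r$ even, $\mathcal{D}_1=(v(1+N)+(1-v)(1+Q))$, $\mathcal{D}_2=(v(1+Q)+(1-v)(1+N))$, $\mathcal{E}_1=(-vQ-(1-v)N)$, $\mathcal{E}_2=(-vN-(1-v)Q)$. A generator matrix $G_i$ of $\mathcal{E}_i$ is a matrix over $R$ whose rows generate $\mathcal{E}_i$ as an $R$-module. The extended codes: $\widehat{\mathcal{D}}_i$ (resp. $\widetilde{\mathcal{D}}_i$) is the $R$-linear code of length $p+1$ generated by the rows of the matrix whose first row is $(x,y,\dots,y)$ and whose remaining rows are $(0\mid \mathbf{g})$ for the rows $\mathbf{g}$ of $G_i$, where for $p\equiv-1\pmod 8$: $(x,y)=(3,3)$ for $\widehat{\mathcal{D}}_i$ and $(x,y)=(1,3)$ for $\widetilde{\mathcal{D}}_i$; for $p\equiv1\pmod 8$: $(x,y)=(3,1)$ for $\widehat{\mathcal{D}}_i$ and $(x,y)=(1,1)$ for $\widetilde{\mathcal{D}}_i$. Euclidean dual $\mathcal{C}^\perp=\{\mathbf{x}:\sum_ix_ic_i=0\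 \forall\mathbf{c}\in\mathcal{C}\}$; self-dual means $\mathcal{C}=\mathcal{C}^\perp$. *)

theory Defs
  imports Main "HOL-Library.Numeral_Type" "HOL-Number_Theory.Number_Theory"
begin

text \<open>RR a b represents a + b v with a, b in Z_4 (the type 4); v^2 = v.\<close>
datatype R = RR "4" "4"

instantiation R :: comm_ring_1
begin
fun plus_R where "plus_R (RR a b) (RR c d) = RR (a + c) (b + d)"
fun minus_R where "minus_R (RR a b) (RR c d) = RR (a - c) (b - d)"
fun uminus_R where "uminus_R (RR a b) = RR (- a) (- b)"
fun times_R where "times_R (RR a b) (RR c d) = RR (a * c) (a * d + b * c + b * d)"
definition zero_R where "zero_R = RR 0 0"
definition one_R where "one_R = RR 1 0"
instance
proof
  fix x y z :: R
  show "x * y * z = x * (y * z)"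
    by (cases x; cases y; cases z) (simp add: algebra_simps)
  show "x * y = y * x" by (cases x; cases y) (simp add: algebra_simps)
  show "1 * x = x" by (cases x) (simp add: one_R_def)
  show "x + y + z = x + (y + z)" by (cases x; cases y; cases z) (simp add: algebra_simps)
  show "x + y = y + x" by (cases x; cases y) (simp add: algebra_simps)
  show "0 + x = x" by (cases x) (simp add: zero_R_def)
  show "- x + x = 0" by (cases x) (simp add: zero_R_def)
  show "x - y = x + - y" by (cases x; cases y) simp
  show "(x + y) * z = x * z + y * z" by (cases x; cases y; cases z) (simp add: algebra_simps)
  show "(0::R) \<noteq> 1" by (simp add: zero_R_def one_R_def)
qed
end

definition vR :: R where "vR = RR 0 1"

text \<open>A vector of R^n is a function nat => R vanishing outside {0..<n}.\<close>
definition vecs :: "nat \<Rightarrow> (nat \<Rightarrow> R) set" where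
  "vecs n = {x. \<forall>i\<ge>n. x i = 0}"

definition rspan :: "(nat \<Rightarrow> R) set \<Rightarrow> (nat \<Rightarrow> R) set" where
  "rspan S = {(\<lambda>i. \<Sum>j<k. c j * w j i) | (k::nat) c w. \<forall>j<k. w j \<in> S}"

definition edual :: "nat \<Rightarrow> (nat \<Rightarrow> R) set \<Rightarrow> (nat \<Rightarrow> R) set" where
  "edual n C = {x \<in> vecs n. \<forall>c\<in>C. (\<Sum>i<n. x i * c i) = 0}"

definition self_dual :: "nat \<Rightarrow> (nat \<Rightarrow> R) set \<Rightarrow> bool" where
  "self_dual n C \<longleftrightarrow> C = edual n C"

text \<open>Multiplication in R_p on coefficient vectors (cyclic convolution).\<close>
definition cmul :: "nat \<Rightarrow> (nat \<Rightarrow> R) \<Rightarrow> (nat \<Rightarrow> R) \<Rightarrow> (nat \<Rightarrow> R)" where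
  "cmul p f g = (\<lambda>i. if i < p then (\<Sum>j<p. \<Sum>k<p. if (j + k) mod p = i then f j * g k else 0) else 0)"

definition cideal :: "nat \<Rightarrow> (nat \<Rightarrow> R) \<Rightarrow> (nat \<Rightarrow> R) set" where
  "cideal p f = {cmul p g f | g. g \<in> vecs p}"

definition QRset :: "nat \<Rightarrow> nat set" where
  "QRset p = {i. 0 < i \<and> i < p \<and> QuadRes (int p) (int i)}"

definition QNRset :: "nat \<Rightarrow> nat set" where
  "QNRset p = {i. 0 < i \<and> i < p \<and> \<not> QuadRes (int p) (int i)}"

definition Qpol :: "nat \<Rightarrow> nat \<Rightarrow> R" where
  "Qpol p i = (if i \<in> QRset p then 1 else 0)"

definition Npol :: "nat \<Rightarrow> nat \<Rightarrow> R" where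
  "Npol p i = (if i \<in> QNRset p then 1 else 0)"

definition onepol :: "nat \<Rightarrow> R" where
  "onepol i = (if i = 0 then 1 else 0)"

definition vcomb :: "(nat \<Rightarrow> R) \<Rightarrow> (nat \<Rightarrow> R) \<Rightarrow> (nat \<Rightarrow> R)" where
  "vcomb a b = (\<lambda>i. vR * a i + (1 - vR) * b i)"

definition qr_r :: "nat \<Rightarrow> nat" where
  "qr_r p = (if p mod 8 = 7 then (p + 1) div 8 else (p - 1) div 8)"

definition Dgen :: "nat \<Rightarrow> nat \<Rightarrow> (nat \<Rightarrow> R)" where
  "Dgen p i = (let Q = Qpol p; N = Npol p;
      QN = (\<lambda>j. Q j + 2 * N j); NQ = (\<lambda>j. N j + 2 * Q j);
      A = (\<lambda>j. onepol j - N j + 2 * Q j); B = (\<lambda>j. onepol j - Q j + 2 * N j);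
      N1 = (\<lambda>j. onepol j + N j); Q1 = (\<lambda>j. onepol j + Q j);
      mQ = (\<lambda>j. - Q j); mN = (\<lambda>j. - N j) in
    if p mod 8 = 7 then
      (if odd (qr_r p) then (if i = 1 then vcomb QN NQ else vcomb NQ QN)
       else (if i = 1 then vcomb mQ mN else vcomb mN mQ))
    else
      (if odd (qr_r p) then (if i = 1 then vcomb A B else vcomb B A)
       else (if i = 1 then vcomb N1 Q1 else vcomb Q1 N1)))"

definition Egen :: "nat \<Rightarrow> nat \<Rightarrow> (nat \<Rightarrow> R)" where
  "Egen p i = (let Q = Qpol p; N = Npol p;
      QN = (\<lambda>j. Q j + 2 * N j); NQ = (\<lambda>j. N j + 2 * Q j);
      A = (\<lambda>j. onepol j - N j + 2 * Q j); B = (\<lambda>j. onepol j - Q j + 2 * N j);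
      N1 = (\<lambda>j. onepol j + N j); Q1 = (\<lambda>j. onepol j + Q j);
      mQ = (\<lambda>j. - Q j); mN = (\<lambda>j. - N j) in
    if p mod 8 = 7 then
      (if odd (qr_r p) then (if i = 1 then vcomb A B else vcomb B A)
       else (if i = 1 then vcomb N1 Q1 else vcomb Q1 N1))
    else
      (if odd (qr_r p) then (if i = 1 then vcomb QN NQ else vcomb NQ QN)
       else (if i = 1 then vcomb mQ mN else vcomb mN mQ)))"

definition Dcode :: "nat \<Rightarrow> nat \<Rightarrow> (nat \<Rightarrow> R) set" where
  "Dcode p i = cideal p (Dgen p i)"

definition Ecode :: "nat \<Rightarrow> nat \<Rightarrow> (nat \<Rightarrow> R) set" where
  "Ecode p i = cideal p (Egen p i)"

definition ext_code :: "nat \<Rightarrow> R \<Rightarrow> R \<Rightarrow> (nat \<Rightarrow> R) list \<Rightarrow> (nat \<Rightarrow> R) set" where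
  "ext_code p x y G = rspan
     (insert (\<lambda>j. if j = 0 then x else if j \<le> p then y else 0)
        ((\<lambda>g j. if 0 < j \<and> j \<le> p then g (j - 1) else 0) ` set G))"

definition hatD :: "nat \<Rightarrow> (nat \<Rightarrow> R) list \<Rightarrow> (nat \<Rightarrow> R) set" where
  "hatD p G = (if p mod 8 = 7 then ext_code p 3 3 G else ext_code p 3 1 G)"

definition tildeD :: "nat \<Rightarrow> (nat \<Rightarrow> R) list \<Rightarrow> (nat \<Rightarrow> R) set" where
  "tildeD p G = (if p mod 8 = 7 then ext_code p 1 3 G else ext_code p 1 1 G)"

end

theory Submission
  imports Defs
begin



definition md :: "nat \<Rightarrow> int \<Rightarrow> nat" where "md p z = nat (z mod int p)"

lemma md_lt: "0 < p \<Longrightarrow> md p z < p"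
  unfolding md_def by (simp add: nat_less_iff)

lemma int_md: "0 < p \<Longrightarrow> int (md p z) = z mod int p"
  unfolding md_def by simp

lemma md_eq_iff: "0 < p \<Longrightarrow> md p z = md p w \<longleftrightarrow> z mod int p = w mod int p"
  by (metis int_md of_nat_eq_iff)

lemma md_of_lt: "j < p \<Longrightarrow> md p (int j) = j"
  unfolding md_def by simp

lemma md_mod: "0 < p \<Longrightarrow> md p (z mod int p) = md p z"
  unfolding md_def by simp

lemma md_md: assumes "0 < p" shows " md p (a * int (md p z) + b) = md p (a * z + b)"
  proof -
  have "(a * (z mod int p) + b) mod int p = (a * z + b) mod int p" by (metis mod_add_left_eq mod_mult_right_eq)
  thus ?thesis using assms unfolding md_def by simp
qed

lemma aff_inj:
  assumes p: "prime p" and cop: "coprime a (int p)"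
  shows "inj_on (\<lambda>j. md p (a * int j + b)) {..<p}"
proof (rule inj_onI)
  fix j j' assume j: "j \<in> {..<p}" and j': "j' \<in> {..<p}" and eq: "md p (a * int j + b) = md p (a * int j' + b)"
  have p0: "0 < p" using p prime_gt_0_nat by blast
  have "(a * int j + b) mod int p = (a * int j' + b) mod int p" using eq md_eq_iff p0 by blast
  hence "[a * int j + b = a * int j' + b] (mod int p)" by (simp add: cong_def)
  hence "[a * int j = a * int j'] (mod int p)" by (simp only: cong_add_rcancel)
  hence "[int j = int j'] (mod int p)" using cong_mult_lcancel[OF cop] by simp
  thus "j = j'" using j j' by (simp add: cong_def)
qed

lemma aff_bij:
  assumes p: "prime p" and cop: "coprime a (int p)"
  shows "bij_betw (\<lambda>j. md p (a * int j + b)) {..<p} {..<p}"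
proof -
  have p0: "0 < p" using p prime_gt_0_nat by blast
  have "(\<lambda>j. md p (a * int j + b)) ` {..<p} = {..<p}"
    by (rule endo_inj_surj) (use aff_inj[OF p cop] md_lt[OF p0] in \<open>auto simp del: of_nat_less_iff\<close>)
  thus ?thesis using aff_inj[OF p cop] by (simp add: bij_betw_def)
qed

lemma aff_sum:
  assumes p: "prime p" and cop: "coprime a (int p)"
  shows "(\<Sum>j<p. F (md p (a * int j + b))) = (\<Sum>j<p. F j)"
  using sum.reindex_bij_betw[OF aff_bij[OF p cop, of b], of F] by simp

lemma aff_card:
  assumes p: "prime p" and cop: "coprime a (int p)"
  shows "card {j\<in>{..<p}. P (md p (a * int j + b))} = card {j\<in>{..<p}. P j}"
proof -
  let ?h = "\<lambda>j. md p (a * int j + b)"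
  have 1: "?h ` {j\<in>{..<p}. P (?h j)} = {j\<in>{..<p}. P j}"
    using aff_bij[OF p cop, of b] unfolding bij_betw_def by auto
  have 2: "inj_on ?h {j\<in>{..<p}. P (?h j)}"
    using aff_inj[OF p cop, of b] by (rule inj_on_subset) auto
  have "card (?h ` {j\<in>{..<p}. P (?h j)}) = card {j\<in>{..<p}. P (?h j)}"
    by (rule card_image[OF 2])
  thus ?thesis unfolding 1 by simp
qed



lemma prime_int_p: "prime p \<Longrightarrow> prime (int p)" by simp

lemma qr_mod: "QuadRes m a = QuadRes m (a mod m)"
  unfolding QuadRes_def cong_def by simp

lemma qr_mult:
  assumes p: "prime p" "2 < p" and a: "\<not> int p dvd a" and b: "\<not> int p dvd b"
  shows "QuadRes (int p) (a * b) \<longleftrightarrow> (QuadRes (int p) a \<longleftrightarrow> QuadRes (int p) b)"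
proof -
  let ?k = "(p - 1) div 2"
  have pi: "prime (int p)" "2 < int p" using p by auto
  have ab: "\<not> int p dvd a * b" using a b pi(1) by (simp add: prime_dvd_mult_iff)
  have ea: "[Legendre a (int p) = a ^ ?k] (mod int p)" using euler_criterion[OF p] by simp
  have eb: "[Legendre b (int p) = b ^ ?k] (mod int p)" using euler_criterion[OF p] by simp
  have eab: "[Legendre (a*b) (int p) = (a*b) ^ ?k] (mod int p)" using euler_criterion[OF p] by simp
  have "[Legendre a (int p) * Legendre b (int p) = a ^ ?k * b ^ ?k] (mod int p)"
    using ea eb by (rule cong_mult)
  hence c: "[Legendre (a*b) (int p) = Legendre a (int p) * Legendre b (int p)] (mod int p)"
    using eab by (metis cong_sym cong_trans power_mult_distrib)
  have na: "\<not> [a = 0] (mod int p)" using a by (simp add: cong_0_iff)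
  have nb: "\<not> [b = 0] (mod int p)" using b by (simp add: cong_0_iff)
  have nab: "\<not> [a*b = 0] (mod int p)" using ab by (simp add: cong_0_iff)
  have ne: "\<not> [1 = -1] (mod int p)"
  proof
    assume "[1 = -1] (mod int p)"
    hence "int p dvd 2" by (simp add: cong_iff_dvd_diff)
    thus False using pi(2) by (simp add: zdvd_not_zless)
  qed
  have ne2: "\<not> [-1 = 1] (mod int p)" using ne cong_sym by blast
  show ?thesis using c na nb nab ne ne2 unfolding Legendre_def
    by (auto split: if_splits)
qed

lemma qr_neg1:
  assumes p: "prime p" "2 < p"
  shows "QuadRes (int p) (-1) \<longleftrightarrow> p mod 4 = 1"
proof -
  let ?k = "(p - 1) div 2"
  have pi: "prime (int p)" "2 < int p" using p by auto
  have e: "[Legendre (-1) (int p) = (-1) ^ ?k] (mod int p)" using euler_criterion[OF p] by simp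
  have n0: "\<not> [-1 = 0] (mod int p)" using pi by (simp add: cong_0_iff)
  have ne: "\<not> [1 = -1] (mod int p)"
  proof
    assume "[1 = -1] (mod int p)"
    hence "int p dvd 2" by (simp add: cong_iff_dvd_diff)
    thus False using pi(2) by (simp add: zdvd_not_zless)
  qed
  have ne2: "\<not> [-1 = 1] (mod int p)" using ne cong_sym by blast
  have op: "odd p" using p prime_odd_nat by blast
  show ?thesis
  proof (cases "p mod 4 = 1")
    case True
    then obtain m where "p = 4*m+1" by (metis mod_mult_div_eq add.commute)
    hence "?k = 2*m" by simp
    hence "(-1::int) ^ ?k = 1" by simp
    thus ?thesis using e n0 ne2 True unfolding Legendre_def by (auto split: if_splits)
  next
    case False
    hence "p mod 4 = 3" using op by presburger
    then obtain m where "p = 4*m+3" by (metis mod_mult_div_eq add.commute)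
    hence "?k = 2*m + 1" by simp
    hence "(-1::int) ^ ?k = -1" by simp
    thus ?thesis using e n0 ne False unfolding Legendre_def by (auto split: if_splits)
  qed
qed

definition cls :: "nat \<Rightarrow> bool \<Rightarrow> nat set" where
  "cls p b = (if b then QRset p else QNRset p)"

lemma md_dvd: assumes "0 < p" shows "md p z = 0 \<longleftrightarrow> int p dvd z"
proof -
  have "0 \<le> z mod int p" using assms by simp
  thus ?thesis unfolding md_def by (auto simp: dvd_eq_mod_eq_0)
qed

lemma md_cls:
  assumes "0 < p"
  shows "md p z \<in> cls p b \<longleftrightarrow> (\<not> int p dvd z \<and> QuadRes (int p) z = b)"
proof -
  have "QuadRes (int p) (int (md p z)) = QuadRes (int p) z"
    using int_md[OF assms] qr_mod by metis
  moreover have "0 < md p z \<longleftrightarrow> \<not> int p dvd z" using md_dvd[OF assms, of z] by linarith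
  ultimately show ?thesis using md_lt[OF assms, of z]
    unfolding cls_def QRset_def QNRset_def by auto
qed

lemma nat_cls:
  assumes "0 < p" "j < p"
  shows "j \<in> cls p b \<longleftrightarrow> (\<not> int p dvd int j \<and> QuadRes (int p) (int j) = b)"
  using md_cls[OF assms(1), of "int j" b] md_of_lt[OF assms(2)] by simp

lemma cls_sub: "cls p b \<subseteq> {..<p}"
  unfolding cls_def QRset_def QNRset_def by auto

lemma cls_nz: "j \<in> cls p b \<Longrightarrow> 0 < j \<and> j < p"
  unfolding cls_def QRset_def QNRset_def by (auto split: if_splits)

lemma md_cong: "[z = w] (mod int p) \<Longrightarrow> md p z = md p w"
  unfolding md_def cong_def by simp



locale qrp =
  fixes p :: nat
  assumes prime: "prime p" and gt2: "2 < p"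
begin

lemma p0: "0 < p" using gt2 by simp
lemma podd: "odd p" using prime gt2 prime_odd_nat by blast

abbreviation kk where "kk \<equiv> (p - 1) div 2"

lemma p_eq: "p = 2 * kk + 1" using podd by presburger

lemma cls_disj: "cls p True \<inter> cls p False = {}"
  unfolding cls_def QRset_def QNRset_def by auto

lemma cls_un: "{..<p} = insert 0 (cls p True \<union> cls p False)"
  using p0 unfolding cls_def QRset_def QNRset_def by auto

lemma cls_fin: "finite (cls p b)"
  using cls_sub finite_subset by blast

lemma card_sum: "card (cls p True) + card (cls p False) = p - 1"
proof -
  have "card {..<p} = card (insert 0 (cls p True \<union> cls p False))" using cls_un by simp
  also have "\<dots> = Suc (card (cls p True \<union> cls p False))"
    using cls_nz cls_fin by (subst card_insert_disjoint) auto
  also have "card (cls p True \<union> cls p False) = card (cls p True) + card (cls p False)"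
    using cls_disj cls_fin by (simp add: card_Un_disjoint)
  finally show ?thesis by simp
qed

lemma card_bound: "card (cls p True) \<le> kk"
proof -
  have sub: "cls p True \<subseteq> (\<lambda>x. md p (int x * int x)) ` {1..kk}"
  proof
    fix i assume i: "i \<in> cls p True"
    hence ip: "0 < i" "i < p" using cls_nz by auto
    have "QuadRes (int p) (int i)" using i nat_cls[OF p0 ip(2)] by simp
    then obtain y where y: "[y^2 = int i] (mod int p)" unfolding QuadRes_def by blast
    define y' where "y' = y mod int p"
    have y'r: "0 \<le> y'" "y' < int p" using p0 unfolding y'_def by auto
    have "[y' = y] (mod int p)" unfolding y'_def cong_def by simp
    hence y2: "[y'*y' = int i] (mod int p)" using y by (metis cong_mult cong_trans power2_eq_square)
    have "y' \<noteq> 0"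
    proof
      assume "y' = 0"
      hence "[0 = int i] (mod int p)" using y2 by simp
      hence "p dvd i" by (metis cong_0_iff cong_sym of_nat_dvd_iff)
      thus False using ip nat_dvd_not_less by blast
    qed
    show "i \<in> (\<lambda>x. md p (int x * int x)) ` {1..kk}"
    proof (cases "y' \<le> int kk")
      case True
      have "md p (int (nat y') * int (nat y')) = md p (int i)"
        using y2 y'r by (intro md_cong) simp
      moreover have "nat y' \<in> {1..kk}" using True \<open>y' \<noteq> 0\<close> y'r by auto
      ultimately show ?thesis using md_of_lt[OF ip(2)] by force
    next
      case False
      define x where "x = p - nat y'"
      have xi: "int x = int p - y'" using y'r unfolding x_def by simp
      have "int x - (- y') = int p" using xi by simp
      hence xy: "[int x = - y'] (mod int p)" unfolding cong_iff_dvd_diff by simp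
      have "[int x * int x = (- y') * (- y')] (mod int p)" by (rule cong_mult[OF xy xy])
      hence "[int x * int x = int i] (mod int p)" using y2 by (simp add: cong_trans)
      hence "md p (int x * int x) = md p (int i)" by (rule md_cong)
      moreover have "x \<in> {1..kk}" using False y'r p_eq unfolding x_def by auto
      ultimately show ?thesis using md_of_lt[OF ip(2)] by force
    qed
  qed
  have "card (cls p True) \<le> card ((\<lambda>x. md p (int x * int x)) ` {1..kk})"
    by (rule card_mono[OF _ sub]) simp
  also have "\<dots> \<le> card {1..kk}" by (rule card_image_le) simp
  finally show ?thesis by simp
qed

lemma exists_nr: "\<exists>t. t \<in> cls p False"
proof -
  have "p - 1 = 2 * kk" using p_eq by simp
  hence "card (cls p False) > 0" using card_sum card_bound gt2 p_eq by linarith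
  thus ?thesis by (metis card.empty ex_in_conv less_irrefl)
qed

lemma md_mult_cls:
  assumes "\<not> int p dvd a" "\<not> int p dvd b"
  shows "md p (a * b) \<in> cls p c \<longleftrightarrow> (QuadRes (int p) a = QuadRes (int p) b) = c"
proof -
  have "\<not> int p dvd a * b" using assms prime by (simp add: prime_dvd_mult_iff)
  thus ?thesis using md_cls[OF p0, of "a*b" c] qr_mult[OF prime gt2 assms] by auto
qed

lemma card_eq: "card (cls p True) = card (cls p False)"
proof -
  obtain t where t: "t \<in> cls p False" using exists_nr by blast
  have tp: "0 < t" "t < p" using cls_nz[OF t] by auto
  have tnd: "\<not> int p dvd int t" using tp nat_dvd_not_less by simp
  have tq: "\<not> QuadRes (int p) (int t)" using t nat_cls[OF p0 tp(2)] by simp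
  have cop: "coprime (int t) (int p)"
  proof -
    have "coprime p t" using prime_imp_coprime[OF prime] tp nat_dvd_not_less by blast
    thus ?thesis by (simp add: coprime_commute)
  qed
  have "card {j\<in>{..<p}. md p (int t * int j + 0) \<in> cls p False} = card {j\<in>{..<p}. j \<in> cls p False}"
    by (rule aff_card[OF prime cop])
  moreover have "{j\<in>{..<p}. md p (int t * int j + 0) \<in> cls p False} = cls p True"
  proof -
    have "md p (int t * int j) \<in> cls p False \<longleftrightarrow> j \<in> cls p True" if "j < p" for j
    proof (cases "j = 0")
      case True
      have "md p (int t * int j) = 0" using True by (simp add: md_def)
      thus ?thesis using True cls_nz by (metis less_irrefl)
    next
      case False
      hence "\<not> int p dvd int j" using that nat_dvd_not_less by simp
      thus ?thesis using md_mult_cls[OF tnd] tq nat_cls[OF p0 that] by auto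
    qed
    thus ?thesis using cls_sub by auto
  qed
  moreover have "{j\<in>{..<p}. j \<in> cls p False} = cls p False" using cls_sub by auto
  ultimately show ?thesis by simp
qed

lemma card_cls: "card (cls p b) = kk"
  using card_eq card_sum p_eq by (cases b) auto

end


definition cnt :: "nat \<Rightarrow> nat set \<Rightarrow> nat set \<Rightarrow> nat \<Rightarrow> nat" where
  "cnt p S T i = card {j\<in>{..<p}. j \<in> S \<and> md p (int i - int j) \<in> T}"

lemma card_sum_if: "finite A \<Longrightarrow> card {x\<in>A. P x} = (\<Sum>x\<in>A. if P x then 1 else 0)"
  by (simp add: sum.If_cases Int_def conj_commute)

context qrp begin

lemma cop_lt: "0 < c \<Longrightarrow> c < p \<Longrightarrow> coprime (int c) (int p)"
proof -
  assume "0 < c" "c < p"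
  hence "coprime p c" using prime_imp_coprime[OF prime] nat_dvd_not_less by blast
  thus ?thesis by (simp add: coprime_commute)
qed

lemma ndvd_lt: "0 < c \<Longrightarrow> c < p \<Longrightarrow> \<not> int p dvd int c"
  using nat_dvd_not_less by simp

lemma md_zero_cls: "md p (int p * z) \<notin> cls p b"
  using md_cls[OF p0] by simp

lemma cnt_scale:
  assumes c: "0 < c" "c < p" and i: "i < p"
  shows "cnt p (cls p b1) (cls p b2) (md p (int c * int i)) =
         cnt p (cls p (QuadRes (int p) (int c) = b1)) (cls p (QuadRes (int p) (int c) = b2)) i"
proof -
  let ?q = "QuadRes (int p) (int c)"
  let ?P = "\<lambda>j. j \<in> cls p b1 \<and> md p (int (md p (int c * int i)) - int j) \<in> cls p b2"
  have "card {j\<in>{..<p}. ?P (md p (int c * int j + 0))} = card {j\<in>{..<p}. ?P j}"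
    by (rule aff_card[OF prime cop_lt[OF c]])
  moreover have "{j\<in>{..<p}. ?P (md p (int c * int j + 0))} =
      {j\<in>{..<p}. j \<in> cls p (?q = b1) \<and> md p (int i - int j) \<in> cls p (?q = b2)}"
  proof -
    have "?P (md p (int c * int j)) \<longleftrightarrow> j \<in> cls p (?q = b1) \<and> md p (int i - int j) \<in> cls p (?q = b2)"
      if j: "j < p" for j
    proof -
      have e1: "md p (int c * int j) \<in> cls p b1 \<longleftrightarrow> j \<in> cls p (?q = b1)"
      proof (cases "j = 0")
        case True
        have "md p (int c * int j) = 0" using True by (simp add: md_def)
        thus ?thesis using True cls_nz by (metis less_irrefl)
      next
        case False
        hence nj: "\<not> int p dvd int j" using ndvd_lt[of j] j by simp
        show ?thesis using md_mult_cls[OF ndvd_lt[OF c] nj] nj nat_cls[OF p0 j] by (simp, blast)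
      qed
      have "md p (int (md p (int c * int i)) - int (md p (int c * int j))) = md p (int c * (int i - int j))"
      proof (rule md_cong)
        have a: "[int (md p (int c * int i)) = int c * int i] (mod int p)" by (simp add: int_md[OF p0] cong_def)
        have b: "[int (md p (int c * int j)) = int c * int j] (mod int p)" by (simp add: int_md[OF p0] cong_def)
        show "[int (md p (int c * int i)) - int (md p (int c * int j)) = int c * (int i - int j)] (mod int p)"
          using cong_diff[OF a b] by (simp add: right_diff_distrib)
      qed
      moreover have "md p (int c * (int i - int j)) \<in> cls p b2 \<longleftrightarrow> md p (int i - int j) \<in> cls p (?q = b2)"
      proof (cases "int p dvd (int i - int j)")
        case True
        thus ?thesis using md_cls[OF p0] by auto
      next
        case False
        thus ?thesis using md_mult_cls[OF ndvd_lt[OF c] False] md_cls[OF p0] by auto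
      qed
      ultimately show ?thesis using e1 by simp
    qed
    thus ?thesis by auto
  qed
  ultimately show ?thesis unfolding cnt_def by simp
qed

lemma md_back: "j < p \<Longrightarrow> md p (int i - int (md p (int i - int j))) = j"
proof -
  assume j: "j < p"
  have "md p (int i - int (md p (int i - int j))) = md p (int j)"
  proof (rule md_cong)
    have a: "[int (md p (int i - int j)) = int i - int j] (mod int p)" by (simp add: int_md[OF p0] cong_def)
    show "[int i - int (md p (int i - int j)) = int j] (mod int p)"
      using cong_diff[OF cong_refl[of "int i"] a] by simp
  qed
  thus ?thesis using md_of_lt[OF j] by simp
qed

lemma cnt_sym: "cnt p S T i = cnt p T S i"
proof -
  let ?P = "\<lambda>j. j \<in> T \<and> md p (int i - int j) \<in> S"
  have cop: "coprime (-1::int) (int p)" by simp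
  have "card {j\<in>{..<p}. ?P (md p (-1 * int j + int i))} = card {j\<in>{..<p}. ?P j}"
    by (rule aff_card[OF prime cop])
  moreover have "{j\<in>{..<p}. ?P (md p (-1 * int j + int i))} = {j\<in>{..<p}. j \<in> S \<and> md p (int i - int j) \<in> T}"
    using md_back by auto
  ultimately show ?thesis unfolding cnt_def by simp
qed

lemma cnt_row:
  assumes i: "i < p"
  shows "cnt p (cls p b) (cls p True) i + cnt p (cls p b) (cls p False) i + (if i \<in> cls p b then 1 else 0) = kk"
proof -
  let ?S = "cls p b"
  let ?A = "{j\<in>{..<p}. j \<in> ?S \<and> md p (int i - int j) \<in> cls p True}"
  let ?B = "{j\<in>{..<p}. j \<in> ?S \<and> md p (int i - int j) \<in> cls p False}"
  let ?Z = "{j\<in>{..<p}. j \<in> ?S \<and> md p (int i - int j) = 0}"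
  have z: "?Z = (if i \<in> ?S then {i} else {})"
  proof -
    have "md p (int i - int j) = 0 \<longleftrightarrow> j = i" if "j < p" for j
    proof -
      have "md p (int i - int j) = 0 \<longleftrightarrow> (int i - int j) mod int p = 0" using int_md[OF p0] by (metis of_nat_eq_0_iff)
      also have "\<dots> \<longleftrightarrow> int i mod int p = int j mod int p" by (simp add: mod_eq_dvd_iff dvd_eq_mod_eq_0)
      also have "\<dots> \<longleftrightarrow> j = i" using i that by auto
      finally show ?thesis .
    qed
    thus ?thesis using i by auto
  qed
  have un: "{j\<in>{..<p}. j \<in> ?S} = ?A \<union> ?B \<union> ?Z"
  proof -
    have *: "md p (int i - int j) \<in> insert 0 (cls p True \<union> cls p False)" for j
      using md_lt[OF p0] cls_un by blast
    show ?thesis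
      apply (rule Set.set_eqI)
      subgoal for j using *[of j] by blast
      done
  qed
  have d1: "?A \<inter> ?B = {}" using cls_disj by auto
  have d2: "(?A \<union> ?B) \<inter> ?Z = {}" using cls_nz by fastforce
  have "card {j\<in>{..<p}. j \<in> ?S} = card ?A + card ?B + card ?Z"
    unfolding un using d1 d2 by (simp add: card_Un_disjoint)
  moreover have "{j\<in>{..<p}. j \<in> ?S} = ?S" using cls_sub by auto
  ultimately show ?thesis using z card_cls unfolding cnt_def by (simp split: if_splits)
qed

lemma cnt_total: "(\<Sum>i<p. cnt p (cls p True) (cls p True) i) = kk * kk"
proof -
  let ?Q = "cls p True"
  have "(\<Sum>i<p. cnt p ?Q ?Q i) = (\<Sum>i<p. \<Sum>j<p. if j \<in> ?Q \<and> md p (int i - int j) \<in> ?Q then 1 else 0)"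
    unfolding cnt_def by (intro sum.cong refl card_sum_if) simp
  also have "\<dots> = (\<Sum>j<p. \<Sum>i<p. if j \<in> ?Q \<and> md p (int i - int j) \<in> ?Q then 1 else 0)"
    by (rule sum.swap)
  also have "\<dots> = (\<Sum>j<p. if j \<in> ?Q then kk else 0)"
  proof (rule sum.cong[OF refl])
    fix j assume "j \<in> {..<p}"
    have "(\<Sum>i<p. if md p (1 * int i + - int j) \<in> ?Q then 1 else 0) = (\<Sum>i<p. if i \<in> ?Q then (1::nat) else 0)"
      by (rule aff_sum[OF prime]) simp
    also have "\<dots> = card {i\<in>{..<p}. i \<in> ?Q}" using card_sum_if[of "{..<p}" "\<lambda>i. i \<in> ?Q"] by simp
    also have "{i\<in>{..<p}. i \<in> ?Q} = ?Q" using cls_sub by auto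
    finally have "(\<Sum>i<p. if md p (int i - int j) \<in> ?Q then 1 else 0) = kk" using card_cls by simp
    thus "(\<Sum>i<p. if j \<in> ?Q \<and> md p (int i - int j) \<in> ?Q then 1 else 0) = (if j \<in> ?Q then kk else 0)"
      by (cases "j \<in> ?Q") auto
  qed
  also have "\<dots> = (\<Sum>j<p. kk * (if j \<in> ?Q then 1 else 0))" by (intro sum.cong) auto
  also have "\<dots> = kk * (\<Sum>j<p. (if j \<in> ?Q then 1 else 0))" by (simp only: sum_distrib_left)
  also have "\<dots> = kk * card {j\<in>{..<p}. j \<in> ?Q}" using card_sum_if[of "{..<p}" "\<lambda>j. j \<in> ?Q"] by simp
  also have "{j\<in>{..<p}. j \<in> ?Q} = ?Q" using cls_sub by auto
  finally show ?thesis using card_cls by simp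
qed

abbreviation q1 where "q1 \<equiv> QuadRes (int p) (-1)"

lemma cnt0: "cnt p (cls p b1) (cls p b2) 0 = (if (q1 = b1) = b2 then kk else 0)"
proof -
  have "{j\<in>{..<p}. j \<in> cls p b1 \<and> md p (int 0 - int j) \<in> cls p b2} = (if (q1 = b1) = b2 then cls p b1 else {})"
  proof -
    have "md p (- 1 * int j) \<in> cls p b2 \<longleftrightarrow> ((q1 = b1) = b2)" if "j \<in> cls p b1" for j
    proof -
      have j: "0 < j" "j < p" using cls_nz[OF that] by auto
      have "\<not> int p dvd (-1)"
      proof
        assume "int p dvd -1"
        hence "int p dvd int 1" by simp
        hence "p dvd 1" by (simp only: of_nat_dvd_iff)
        thus False using gt2 by simp
      qed
      thus ?thesis using md_mult_cls[of "-1" "int j" b2] ndvd_lt[OF j] nat_cls[OF p0 j(2)] that by auto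
    qed
    thus ?thesis using cls_sub by auto
  qed
  thus ?thesis unfolding cnt_def using card_cls by simp
qed

abbreviation X where "X b1 b2 \<equiv> cnt p (cls p b1) (cls p b2) 1"

lemma one_QR: "1 \<in> cls p True"
proof -
  have "QuadRes (int p) 1" unfolding QuadRes_def by (rule exI[of _ 1]) simp
  thus ?thesis using gt2 unfolding cls_def QRset_def by simp
qed

lemma cnt_nz:
  assumes "i \<in> cls p b"
  shows "cnt p (cls p b1) (cls p b2) i = X (b = b1) (b = b2)"
proof -
  have i: "0 < i" "i < p" using cls_nz[OF assms] by auto
  have "QuadRes (int p) (int i) = b" using assms nat_cls[OF p0 i(2)] by simp
  moreover have "md p (int i * int 1) = i" using md_of_lt[OF i(2)] by simp
  moreover have "1 < p" using gt2 by simp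
  ultimately show ?thesis using cnt_scale[OF i(1) i(2) \<open>1 < p\<close>, of b1 b2] by simp
qed

end


context qrp begin

lemma kk_pos: "0 < kk" using gt2 p_eq by linarith

lemma R1: "X True True + X True False + 1 = kk"
  using cnt_row[of 1 True] one_QR gt2 by simp

lemma R2: "X False True + X False False = kk"
proof -
  have "1 \<notin> cls p False" using one_QR cls_disj by blast
  thus ?thesis using cnt_row[of 1 False] gt2 by simp
qed

lemma R3: "X False True = X True False"
  using cnt_sym by simp

lemma R4: "(if q1 then kk else 0) + kk * X True True + kk * X False False = kk * kk"
proof -
  let ?f = "cnt p (cls p True) (cls p True)"
  have "(\<Sum>i<p. ?f i) = ?f 0 + (\<Sum>i\<in>cls p True. ?f i) + (\<Sum>i\<in>cls p False. ?f i)"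
  proof -
    have "(\<Sum>i<p. ?f i) = (\<Sum>i\<in>insert 0 (cls p True \<union> cls p False). ?f i)" using cls_un by simp
    also have "\<dots> = ?f 0 + (\<Sum>i\<in>cls p True \<union> cls p False. ?f i)"
      using cls_nz cls_fin by (subst sum.insert) auto
    also have "(\<Sum>i\<in>cls p True \<union> cls p False. ?f i) = (\<Sum>i\<in>cls p True. ?f i) + (\<Sum>i\<in>cls p False. ?f i)"
      using cls_disj cls_fin by (simp add: sum.union_disjoint)
    finally show ?thesis by simp
  qed
  also have "(\<Sum>i\<in>cls p True. ?f i) = kk * X True True"
    using cnt_nz[of _ True True True] card_cls[of True] by simp
  also have "(\<Sum>i\<in>cls p False. ?f i) = kk * X False False"
    using cnt_nz[of _ False True True] card_cls[of False] by simp
  also have "?f 0 = (if q1 then kk else 0)" using cnt0[of True True] by simp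
  finally show ?thesis using cnt_total by simp
qed

lemma Xsolve:
  "X True True + X True False + 1 = kk \<and> X True False + X False False = kk \<and>
   (if q1 then 2 * X True False = kk else 2 * X True False + 1 = kk)"
proof -
  have r2: "X True False + X False False = kk" using R2 R3 by simp
  show ?thesis
  proof (cases q1)
    case True
    hence "kk * (1 + X True True + X False False) = kk * kk" using R4 by (simp add: algebra_simps)
    hence "1 + X True True + X False False = kk" using kk_pos by (metis mult_left_cancel not_gr0)
    thus ?thesis using R1 r2 True by simp
  next
    case False
    hence "kk * (X True True + X False False) = kk * kk" using R4 by (simp add: algebra_simps)
    hence "X True True + X False False = kk" using kk_pos by simp
    thus ?thesis using R1 r2 False by simp
  qed
qed

lemma cnt_formula:
  assumes "i < p"
  shows "cnt p (cls p b1) (cls p b2) i = (if i = 0 then (if (q1 = b1) = b2 then kk else 0)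
     else if i \<in> cls p True then X b1 b2 else X (\<not> b1) (\<not> b2))"
proof -
  have "i \<in> insert 0 (cls p True \<union> cls p False)" using assms cls_un by (metis lessThan_iff)
  then consider "i = 0" | "i \<in> cls p True" | "i \<in> cls p False" by blast
  thus ?thesis
  proof cases
    case 1 thus ?thesis using cnt0 by simp
  next
    case 2
    hence "i \<noteq> 0" using cls_nz by blast
    thus ?thesis using cnt_nz[OF 2, of b1 b2] 2 by simp
  next
    case 3
    hence "i \<notin> cls p True" "i \<noteq> 0" using cls_disj cls_nz by auto
    thus ?thesis using cnt_nz[OF 3, of b1 b2] by simp
  qed
qed

end


lemma cmul_alt:
  assumes p0: "0 < p" and i: "i < p"
  shows "cmul p f g i = (\<Sum>j<p. f j * g (md p (int i - int j)))"
proof -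
  have "(\<Sum>k<p. if (j + k) mod p = i then f j * g k else 0) = f j * g (md p (int i - int j))" if j: "j < p" for j
  proof -
    have eq: "(j + k) mod p = i \<longleftrightarrow> k = md p (int i - int j)" if k: "k < p" for k
    proof -
      have "(j + k) mod p = i \<longleftrightarrow> [j + k = i] (mod p)" using i by (simp add: cong_def)
      also have "\<dots> \<longleftrightarrow> [int j + int k = int i] (mod int p)" by (metis cong_int_iff of_nat_add)
      also have "\<dots> \<longleftrightarrow> [int k = int i - int j] (mod int p)" by (metis add.commute cong_add_lcancel diff_add_cancel)
      also have "\<dots> \<longleftrightarrow> md p (int k) = md p (int i - int j)" unfolding md_def cong_def
        using p0 by (metis int_md md_def of_nat_eq_iff)
      also have "\<dots> \<longleftrightarrow> k = md p (int i - int j)" using md_of_lt[OF k] by simp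
      finally show ?thesis .
    qed
    have "(\<Sum>k<p. if (j + k) mod p = i then f j * g k else 0) = (\<Sum>k<p. if k = md p (int i - int j) then f j * g k else 0)"
      using eq by (intro sum.cong) auto
    also have "\<dots> = f j * g (md p (int i - int j))" using md_lt[OF p0] by simp
    finally show ?thesis .
  qed
  thus ?thesis unfolding cmul_def using i by simp
qed

definition ind :: "nat \<Rightarrow> bool \<Rightarrow> nat \<Rightarrow> R" where
  "ind p b i = (if i \<in> cls p b then 1 else 0)"

definition lin :: "nat \<Rightarrow> R \<Rightarrow> R \<Rightarrow> R \<Rightarrow> nat \<Rightarrow> R" where
  "lin p a b c i = a * onepol i + b * ind p True i + c * ind p False i"

lemma Qpol_ind: "Qpol p = ind p True"
  unfolding Qpol_def ind_def cls_def by auto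
lemma Npol_ind: "Npol p = ind p False"
  unfolding Npol_def ind_def cls_def by auto

definition conv :: "nat \<Rightarrow> (nat \<Rightarrow> R) \<Rightarrow> (nat \<Rightarrow> R) \<Rightarrow> nat \<Rightarrow> R" where
  "conv p f g i = (\<Sum>j<p. f j * g (md p (int i - int j)))"

lemma conv_lin:
  "conv p (\<lambda>j. a * f1 j + b * f2 j + c * f3 j) h i = a * conv p f1 h i + b * conv p f2 h i + c * conv p f3 h i"
  unfolding conv_def by (simp add: algebra_simps sum.distrib sum_distrib_left)

lemma conv_lin2:
  "conv p h (\<lambda>j. a * f1 j + b * f2 j + c * f3 j) i = a * conv p h f1 i + b * conv p h f2 i + c * conv p h f3 i"
  unfolding conv_def by (simp add: algebra_simps sum.distrib sum_distrib_left)

context qrp begin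

lemma conv_one_l: "i < p \<Longrightarrow> conv p onepol g i = g i"
proof -
  assume i: "i < p"
  have "conv p onepol g i = (\<Sum>j<p. if j = 0 then g (md p (int i - int j)) else 0)"
    unfolding conv_def onepol_def by (intro sum.cong) auto
  also have "\<dots> = g (md p (int i))" using p0 by simp
  finally show ?thesis using md_of_lt[OF i] by simp
qed

lemma md_zero_iff: "i < p \<Longrightarrow> j < p \<Longrightarrow> md p (int i - int j) = 0 \<longleftrightarrow> j = i"
proof -
  assume i: "i < p" and j: "j < p"
  have "md p (int i - int j) = 0 \<longleftrightarrow> (int i - int j) mod int p = 0" using int_md[OF p0] by (metis of_nat_eq_0_iff)
  also have "\<dots> \<longleftrightarrow> int i mod int p = int j mod int p" by (simp add: mod_eq_dvd_iff dvd_eq_mod_eq_0)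
  also have "\<dots> \<longleftrightarrow> j = i" using i j by auto
  finally show ?thesis .
qed

lemma conv_one_r: "i < p \<Longrightarrow> conv p f onepol i = f i"
proof -
  assume i: "i < p"
  have "conv p f onepol i = (\<Sum>j<p. if j = i then f j else 0)"
    unfolding conv_def onepol_def using md_zero_iff[OF i] by (intro sum.cong) auto
  thus ?thesis using i by simp
qed

lemma conv_ind: "i < p \<Longrightarrow> conv p (ind p b1) (ind p b2) i = of_nat (cnt p (cls p b1) (cls p b2) i)"
proof -
  assume i: "i < p"
  have "conv p (ind p b1) (ind p b2) i = (\<Sum>j<p. if j \<in> cls p b1 \<and> md p (int i - int j) \<in> cls p b2 then 1 else 0)"
    unfolding conv_def ind_def by (intro sum.cong) auto
  also have "\<dots> = of_nat (\<Sum>j<p. if j \<in> cls p b1 \<and> md p (int i - int j) \<in> cls p b2 then (1::nat) else 0)"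
    unfolding of_nat_sum by (intro sum.cong) auto
  also have "\<dots> = of_nat (cnt p (cls p b1) (cls p b2) i)"
    unfolding cnt_def using card_sum_if[of "{..<p}"] by simp
  finally show ?thesis .
qed

end


context qrp begin

abbreviation "s0 \<equiv> (of_nat (if q1 then kk else 0) :: R)"
abbreviation "t0 \<equiv> (of_nat (if q1 then 0 else kk) :: R)"
abbreviation "xR \<equiv> (of_nat (X True True) :: R)"
abbreviation "yR \<equiv> (of_nat (X True False) :: R)"
abbreviation "zR \<equiv> (of_nat (X False False) :: R)"

lemma lin_vals:
  "lin p a b c 0 = a"
  "i \<in> cls p True \<Longrightarrow> lin p a b c i = b"
  "i \<in> cls p False \<Longrightarrow> lin p a b c i = c"
  "p \<le> i \<Longrightarrow> lin p a b c i = 0"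
  using cls_nz cls_disj p0 unfolding lin_def ind_def onepol_def by (auto, fastforce+)

lemma ind0: "ind p b 0 = 0" using cls_nz unfolding ind_def by fastforce

lemma conv_ind_vals:
  assumes "i < p"
  shows "conv p (ind p True) (ind p True) i = (if i = 0 then s0 else if i \<in> cls p True then xR else zR)"
    "conv p (ind p False) (ind p False) i = (if i = 0 then s0 else if i \<in> cls p True then zR else xR)"
    "conv p (ind p True) (ind p False) i = (if i = 0 then t0 else yR)"
    "conv p (ind p False) (ind p True) i = (if i = 0 then t0 else yR)"
  using conv_ind[OF assms] cnt_formula[OF assms] R3 by auto

lemma mul_lin_pt:
  assumes i: "i < p"
  shows "conv p (lin p a b c) (lin p a' b' c') i =
    lin p (a*a' + (b*b' + c*c') * s0 + (b*c' + c*b') * t0)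
          (a*b' + b*a' + b*b'*xR + c*c'*zR + (b*c' + c*b')*yR)
          (a*c' + c*a' + b*b'*zR + c*c'*xR + (b*c' + c*b')*yR) i"
proof -
  have e: "conv p (lin p a b c) (lin p a' b' c') i =
     a * (a' * onepol i + b' * ind p True i + c' * ind p False i)
   + b * (a' * ind p True i + b' * conv p (ind p True) (ind p True) i + c' * conv p (ind p True) (ind p False) i)
   + c * (a' * ind p False i + b' * conv p (ind p False) (ind p True) i + c' * conv p (ind p False) (ind p False) i)"
    unfolding lin_def[abs_def] conv_lin conv_lin2 conv_one_l[OF i] conv_one_r[OF i] by simp
  have "i = 0 \<or> i \<in> cls p True \<or> i \<in> cls p False" using i cls_un by (metis insert_iff lessThan_iff UnE)
  moreover have "i \<noteq> 0 \<Longrightarrow> onepol i = 0" unfolding onepol_def by simp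
  ultimately show ?thesis unfolding e conv_ind_vals[OF i]
    using lin_vals cls_disj cls_nz ind0
    by (elim disjE) (auto simp: ind_def onepol_def algebra_simps)
qed

lemma cmul_lin:
  "cmul p (lin p a b c) (lin p a' b' c') =
    lin p (a*a' + (b*b' + c*c') * s0 + (b*c' + c*b') * t0)
          (a*b' + b*a' + b*b'*xR + c*c'*zR + (b*c' + c*b')*yR)
          (a*c' + c*a' + b*b'*zR + c*c'*xR + (b*c' + c*b')*yR)"
proof
  fix i show "cmul p (lin p a b c) (lin p a' b' c') i = lin p (a*a' + (b*b' + c*c') * s0 + (b*c' + c*b') * t0)
          (a*b' + b*a' + b*b'*xR + c*c'*zR + (b*c' + c*b')*yR)
          (a*c' + c*a' + b*b'*zR + c*c'*xR + (b*c' + c*b')*yR) i"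
  proof (cases "i < p")
    case True thus ?thesis using mul_lin_pt cmul_alt[OF p0] unfolding conv_def by simp
  next
    case False thus ?thesis using lin_vals(4) unfolding cmul_def by simp
  qed
qed

lemma mu_lin:
  assumes i: "i < p"
  shows "lin p a b c (md p (- int i)) = lin p a (if q1 then b else c) (if q1 then c else b) i"
proof -
  have "i = 0 \<or> i \<in> cls p True \<or> i \<in> cls p False" using i cls_un by (metis insert_iff lessThan_iff UnE)
  thus ?thesis
  proof (cases "i = 0")
    case True thus ?thesis using lin_vals by (simp add: md_def)
  next
    case False
    hence h: "i \<in> cls p True \<or> i \<in> cls p False" using \<open>i = 0 \<or> _\<close> by blast
    then obtain bb where ib: "i \<in> cls p bb" by blast
    have ii: "0 < i" "i < p" using cls_nz[OF ib] by auto
    have nd: "\<not> int p dvd int i" using ndvd_lt[OF ii] .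
    have n1: "\<not> int p dvd (-1)"
    proof
      assume "int p dvd -1"
      hence "int p dvd int 1" by simp
      hence "p dvd 1" by (simp only: of_nat_dvd_iff)
      thus False using gt2 by simp
    qed
    have qi: "QuadRes (int p) (int i) = bb" using ib nat_cls[OF p0 i] by simp
    have "md p (-1 * int i) \<in> cls p (q1 = bb)" using md_mult_cls[OF n1 nd] qi by simp
    thus ?thesis using ib lin_vals by (cases bb; cases q1) auto
  qed
qed

lemma sum_ind: "(\<Sum>i<p. ind p b i) = of_nat kk"
proof -
  have "of_nat (card {i\<in>{..<p}. i \<in> cls p b}) = (of_nat (\<Sum>i<p. if i \<in> cls p b then (1::nat) else 0) :: R)"
    using card_sum_if[of "{..<p}" "\<lambda>i. i \<in> cls p b"] by simp
  also have "\<dots> = (\<Sum>i<p. ind p b i)" unfolding of_nat_sum ind_def by (intro sum.cong) auto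
  finally have "(\<Sum>i<p. ind p b i) = of_nat (card {i\<in>{..<p}. i \<in> cls p b})" by simp
  also have "{i\<in>{..<p}. i \<in> cls p b} = cls p b" using cls_sub by auto
  finally show ?thesis using card_cls by simp
qed

lemma sum_lin: "(\<Sum>i<p. lin p a b c i) = a + of_nat kk * b + of_nat kk * c"
proof -
  have "(\<Sum>i<p. onepol i) = 1" unfolding onepol_def using p0 by simp
  thus ?thesis unfolding lin_def by (simp add: sum.distrib sum_distrib_left[symmetric] sum_ind)
qed

end



definition rowv :: "nat \<Rightarrow> R \<Rightarrow> R \<Rightarrow> nat \<Rightarrow> R" where
  "rowv p x y = (\<lambda>j. if j = 0 then x else if j \<le> p then y else 0)"

definition shv :: "nat \<Rightarrow> (nat \<Rightarrow> R) \<Rightarrow> nat \<Rightarrow> R" where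
  "shv p g = (\<lambda>j. if 0 < j \<and> j \<le> p then g (j - 1) else 0)"

definition Tset :: "nat \<Rightarrow> R \<Rightarrow> R \<Rightarrow> (nat \<Rightarrow> R) \<Rightarrow> (nat \<Rightarrow> R) set" where
  "Tset p x y f = {(\<lambda>i. c * rowv p x y i + shv p (cmul p g f) i) | c g. g \<in> vecs p}"

lemma rspan_least:
  assumes z: "(\<lambda>i. 0) \<in> T" and cl: "\<And>u s d. u \<in> T \<Longrightarrow> s \<in> S \<Longrightarrow> (\<lambda>i. u i + d * s i) \<in> T"
  shows "rspan S \<subseteq> T"
proof
  fix v assume "v \<in> rspan S"
  then obtain k c w where v: "v = (\<lambda>i. \<Sum>j<(k::nat). c j * w j i)" and w: "\<forall>j<k. w j \<in> S"
    unfolding rspan_def by auto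
  have "(\<lambda>i. \<Sum>j<n. c j * w j i) \<in> T" if "n \<le> k" for n
    using that
  proof (induction n)
    case 0 thus ?case using z by simp
  next
    case (Suc n)
    hence "(\<lambda>i. (\<Sum>j<n. c j * w j i) + c n * w n i) \<in> T" using cl w by simp
    thus ?case by simp
  qed
  thus "v \<in> T" using v by simp
qed

lemma rspan_mem: "s \<in> S \<Longrightarrow> s \<in> rspan S"
  unfolding rspan_def
  apply (rule CollectI)
  apply (rule exI[of _ "1::nat"])
  apply (rule exI[of _ "\<lambda>_. 1"])
  apply (rule exI[of _ "\<lambda>_. s"])
  by simp

lemma cmul_lin_l: "cmul p (\<lambda>i. g i + d * h i) f = (\<lambda>i. cmul p g f i + d * cmul p h f i)"
proof
  fix i
  have e: "(if b then (g j + d * h j) * f k else 0) = (if b then g j * f k else 0) + d * (if b then h j * f k else 0)" for b j k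
    by (simp add: algebra_simps)
  show "cmul p (\<lambda>i. g i + d * h i) f i = cmul p g f i + d * cmul p h f i"
    unfolding cmul_def e by (simp add: sum.distrib sum_distrib_left)
qed

lemma cmul_zero_l: "cmul p (\<lambda>i. 0) f = (\<lambda>i. 0)"
  unfolding cmul_def by (simp only: mult_zero_left if_cancel sum.neutral_const)

lemma vecs_lin: "g \<in> vecs p \<Longrightarrow> h \<in> vecs p \<Longrightarrow> (\<lambda>i. g i + d * h i) \<in> vecs p"
  unfolding vecs_def by auto

lemma ext_char:
  assumes G: "rspan (set G) = cideal p f"
  shows "ext_code p x y G = Tset p x y f"
proof
  show "ext_code p x y G \<subseteq> Tset p x y f"
    unfolding ext_code_def
  proof (rule rspan_least)
    show "(\<lambda>i. 0) \<in> Tset p x y f" unfolding Tset_def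
      by (rule CollectI, rule exI[of _ 0], rule exI[of _ "\<lambda>i. 0"]) (auto simp: vecs_def cmul_zero_l shv_def)
  next
    fix u s d assume u: "u \<in> Tset p x y f" and s: "s \<in> insert (\<lambda>j. if j = 0 then x else if j \<le> p then y else 0)
             ((\<lambda>g j. if 0 < j \<and> j \<le> p then g (j - 1) else 0) ` set G)"
    from u obtain c g where ug: "u = (\<lambda>i. c * rowv p x y i + shv p (cmul p g f) i)" "g \<in> vecs p"
      unfolding Tset_def by blast
    show "(\<lambda>i. u i + d * s i) \<in> Tset p x y f"
    proof (cases "s = rowv p x y")
      case True
      have "(\<lambda>i. u i + d * s i) = (\<lambda>i. (c + d) * rowv p x y i + shv p (cmul p g f) i)"
        unfolding ug True by (auto simp: algebra_simps)
      thus ?thesis unfolding Tset_def using ug(2) by blast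
    next
      case False
      then obtain w where w: "w \<in> set G" "s = shv p w" using s unfolding rowv_def shv_def by auto
      have "w \<in> cideal p f" using G rspan_mem[OF w(1)] by simp
      then obtain h where h: "w = cmul p h f" "h \<in> vecs p" unfolding cideal_def by blast
      have "(\<lambda>i. u i + d * s i) = (\<lambda>i. c * rowv p x y i + shv p (cmul p (\<lambda>i. g i + d * h i) f) i)"
        unfolding ug w h cmul_lin_l by (auto simp: shv_def algebra_simps)
      thus ?thesis unfolding Tset_def using vecs_lin[OF ug(2) h(2)] by blast
    qed
  qed
next
  show "Tset p x y f \<subseteq> ext_code p x y G"
  proof
    fix u assume "u \<in> Tset p x y f"
    then obtain c g where ug: "u = (\<lambda>i. c * rowv p x y i + shv p (cmul p g f) i)" "g \<in> vecs p"
      unfolding Tset_def by blast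
    have "cmul p g f \<in> rspan (set G)" using G ug(2) unfolding cideal_def by blast
    then obtain k d w where cw: "cmul p g f = (\<lambda>i. \<Sum>j<(k::nat). d j * w j i)" and w: "\<forall>j<k. w j \<in> set G"
      unfolding rspan_def by auto
    define d' where "d' = (\<lambda>j. if j < k then d j else c)"
    define w' where "w' = (\<lambda>j. if j < k then shv p (w j) else rowv p x y)"
    have "u = (\<lambda>i. \<Sum>j<Suc k. d' j * w' j i)"
      unfolding ug cw d'_def w'_def by (auto simp: shv_def sum_distrib_left intro!: sum.cong)
    moreover have "\<forall>j<Suc k. w' j \<in> insert (\<lambda>j. if j = 0 then x else if j \<le> p then y else 0)
             ((\<lambda>g j. if 0 < j \<and> j \<le> p then g (j - 1) else 0) ` set G)"
      using w unfolding w'_def shv_def rowv_def by auto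
    ultimately show "u \<in> ext_code p x y G" unfolding ext_code_def rspan_def by blast
  qed
qed




context qrp begin

lemma sum_cmul: "(\<Sum>m<p. cmul p g f m) = (\<Sum>j<p. g j) * (\<Sum>m<p. f m)"
proof -
  have "(\<Sum>m<p. cmul p g f m) = (\<Sum>m<p. \<Sum>j<p. g j * f (md p (int m - int j)))"
    using cmul_alt[OF p0] by simp
  also have "\<dots> = (\<Sum>j<p. \<Sum>m<p. g j * f (md p (1 * int m + - int j)))"
    by (subst sum.swap) simp
  also have "\<dots> = (\<Sum>j<p. g j * (\<Sum>m<p. f m))"
    by (simp only: sum_distrib_left[symmetric] aff_sum[OF prime coprime_1_left])
  finally show ?thesis by (simp add: sum_distrib_right)
qed

lemma md_plus_minus: "m < p \<Longrightarrow> md p (int (md p (int m + int j)) - int j) = m"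
proof -
  assume m: "m < p"
  have "md p (int (md p (int m + int j)) - int j) = md p (int m)"
  proof (rule md_cong)
    have a: "[int (md p (int m + int j)) = int m + int j] (mod int p)" by (simp add: int_md[OF p0] cong_def)
    show "[int (md p (int m + int j)) - int j = int m] (mod int p)" using cong_diff[OF a cong_refl[of "int j"]] by simp
  qed
  thus ?thesis using md_of_lt[OF m] by simp
qed

lemma inner0:
  assumes H1: "\<forall>i<p. f (md p (- int i)) = onepol i - f' i - of_nat p"
    and H2: "cmul p f' f' = f'" and H3: "(\<Sum>i<p. f' i) = 0"
  shows "(\<Sum>m<p. f' (md p (int m - int j)) * f (md p (int m - int k))) = 0"
proof -
  define d where "d = md p (int k - int j)"
  have dp: "d < p" unfolding d_def using md_lt[OF p0] .
  let ?F = "\<lambda>m. f' (md p (int m - int j)) * f (md p (int m - int k))"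
  have "(\<Sum>m<p. ?F m) = (\<Sum>m<p. ?F (md p (1 * int m + int j)))"
    by (rule aff_sum[OF prime coprime_1_left, symmetric])
  also have "\<dots> = (\<Sum>m<p. f' m * (onepol (md p (int d - int m)) - f' (md p (int d - int m)) - of_nat p))"
  proof (rule sum.cong[OF refl])
    fix m assume "m \<in> {..<p}"
    hence m: "m < p" by simp
    have e1: "md p (int (md p (int m + int j)) - int j) = m" using md_plus_minus[OF m] .
    have e2: "md p (int (md p (int m + int j)) - int k) = md p (- int (md p (int d - int m)))"
    proof (rule md_cong)
      have a: "[int (md p (int m + int j)) = int m + int j] (mod int p)" by (simp add: int_md[OF p0] cong_def)
      have b: "[int (md p (int d - int m)) = int d - int m] (mod int p)" by (simp add: int_md[OF p0] cong_def)
      have c: "[int d = int k - int j] (mod int p)" unfolding d_def by (simp add: int_md[OF p0] cong_def)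
      have "[int (md p (int m + int j)) - int k = int m + int j - int k] (mod int p)" using cong_diff[OF a cong_refl] .
      moreover have "[- int (md p (int d - int m)) = - (int d - int m)] (mod int p)" using cong_minus_minus_iff b by blast
      moreover have "[- (int d - int m) = - ((int k - int j) - int m)] (mod int p)"
        using cong_minus_minus_iff cong_diff[OF c cong_refl[of "int m"]] by blast
      ultimately show "[int (md p (int m + int j)) - int k = - int (md p (int d - int m))] (mod int p)"
        by (metis (no_types, lifting) cong_sym cong_trans diff_diff_eq2 minus_diff_eq add.commute)
    qed
    show "?F (md p (1 * int m + int j)) = f' m * (onepol (md p (int d - int m)) - f' (md p (int d - int m)) - of_nat p)"
      using e1 e2 H1 md_lt[OF p0] by simp
  qed
  also have "\<dots> = conv p f' onepol d - conv p f' f' d - of_nat p * (\<Sum>m<p. f' m)"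
    unfolding conv_def by (simp add: algebra_simps sum_subtractf sum_distrib_left sum.distrib)
  also have "\<dots> = 0"
    using conv_one_r[OF dp] H2 cmul_alt[OF p0 dp, of f' f'] H3 unfolding conv_def by simp
  finally show ?thesis .
qed

lemma orth:
  assumes H1: "\<forall>i<p. f (md p (- int i)) = onepol i - f' i - of_nat p"
    and H2: "cmul p f' f' = f'" and H3: "(\<Sum>i<p. f' i) = 0"
  shows "(\<Sum>m<p. cmul p g' f' m * cmul p g f m) = 0"
proof -
  have "(\<Sum>m<p. cmul p g' f' m * cmul p g f m) =
      (\<Sum>m<p. (\<Sum>j<p. g' j * f' (md p (int m - int j))) * (\<Sum>k<p. g k * f (md p (int m - int k))))"
    using cmul_alt[OF p0] by simp
  also have "\<dots> = (\<Sum>m<p. \<Sum>j<p. \<Sum>k<p. (g' j * g k) * (f' (md p (int m - int j)) * f (md p (int m - int k))))"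
    unfolding sum_product by (intro sum.cong refl) (simp add: algebra_simps)
  also have "\<dots> = (\<Sum>j<p. \<Sum>m<p. \<Sum>k<p. (g' j * g k) * (f' (md p (int m - int j)) * f (md p (int m - int k))))"
    by (rule sum.swap)
  also have "\<dots> = (\<Sum>j<p. \<Sum>k<p. \<Sum>m<p. (g' j * g k) * (f' (md p (int m - int j)) * f (md p (int m - int k))))"
    by (rule sum.cong[OF refl], rule sum.swap)
  also have "\<dots> = 0"
    by (simp add: sum_distrib_left[symmetric] inner0[OF H1 H2 H3])
  finally show ?thesis .
qed

end


context qrp begin

lemma sum_Suc_p: "(\<Sum>i<p+1. F i) = F 0 + (\<Sum>m<p. F (Suc m))"
  unfolding Suc_eq_plus1[symmetric] by (rule sum.lessThan_Suc_shift)

lemma key: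
  fixes f f' :: "nat \<Rightarrow> R" and x y x' y' :: R
  assumes H1: "\<forall>i<p. f (md p (- int i)) = onepol i - f' i - of_nat p"
    and H2: "cmul p f' f' = f'"
    and H3: "(\<Sum>i<p. f i) = 0" "(\<Sum>i<p. f' i) = 0"
    and H4: "x*x = 1" "y'*y' = 1" "-(x*y) = x'*y'*of_nat p" "x*x' + of_nat p*(y*y') = 0"
  shows "edual (p+1) (Tset p x y f) = Tset p x' y' f'"
proof
  show "edual (p+1) (Tset p x y f) \<subseteq> Tset p x' y' f'"
  proof
    fix u assume "u \<in> edual (p+1) (Tset p x y f)"
    hence uv: "u \<in> vecs (p+1)" and uo: "\<And>w. w \<in> Tset p x y f \<Longrightarrow> (\<Sum>i<p+1. u i * w i) = 0"
      unfolding edual_def by auto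
    define a where "a = (\<lambda>m. if m < p then u (Suc m) else 0)"
    define S where "S = (\<Sum>m<p. a m)"
    have av: "a \<in> vecs p" unfolding a_def vecs_def by auto
    have ip: "(\<Sum>i<p+1. u i * w i) = u 0 * w 0 + (\<Sum>m<p. a m * w (Suc m))" for w
      unfolding sum_Suc_p a_def by simp
    have "(\<lambda>i. 1 * rowv p x y i + shv p (cmul p (\<lambda>i. 0) f) i) \<in> Tset p x y f"
      unfolding Tset_def by (rule CollectI, intro exI[of _ 1] exI[of _ "\<lambda>i. 0"]) (simp add: vecs_def)
    from uo[OF this] have "u 0 * x + (\<Sum>m<p. a m * y) = 0"
      unfolding ip by (simp add: rowv_def shv_def cmul_zero_l)
    hence r0: "u 0 * x + S * y = 0" unfolding S_def by (simp add: sum_distrib_right)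
    have as: "a s = cmul p a f' s + of_nat p * S" if s: "s < p" for s
    proof -
      define e where "e = (\<lambda>j. if j = s then (1::R) else 0)"
      have ev: "e \<in> vecs p" unfolding e_def vecs_def using s by auto
      have ce: "cmul p e f m = f (md p (int m - int s))" if "m < p" for m
      proof -
        have "(\<Sum>j<p. e j * f (md p (int m - int j))) = (\<Sum>j<p. if j = s then f (md p (int m - int j)) else 0)"
          unfolding e_def by (intro sum.cong) auto
        thus ?thesis using cmul_alt[OF p0 that, of e f] s by simp
      qed
      have "(\<lambda>i. 0 * rowv p x y i + shv p (cmul p e f) i) \<in> Tset p x y f"
        unfolding Tset_def using ev by blast
      from uo[OF this] have "(\<Sum>m<p. a m * cmul p e f m) = 0"
        unfolding ip by (simp add: shv_def)
      hence z: "(\<Sum>m<p. a m * f (md p (int m - int s))) = 0" using ce by simp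
      have fm: "f (md p (int m - int s)) = onepol (md p (int s - int m)) - f' (md p (int s - int m)) - of_nat p" for m
      proof -
        have "md p (int m - int s) = md p (- int (md p (int s - int m)))"
          by (rule md_cong) (simp add: int_md[OF p0] cong_def mod_minus_eq)
        thus ?thesis using H1 md_lt[OF p0] by simp
      qed
      have "(\<Sum>m<p. a m * f (md p (int m - int s))) = conv p a onepol s - conv p a f' s - of_nat p * S"
        unfolding fm conv_def S_def by (simp add: algebra_simps sum_subtractf sum_distrib_left sum.distrib)
      thus ?thesis using z conv_one_r[OF s] cmul_alt[OF p0 s, of a f'] unfolding conv_def
        by (simp add: algebra_simps)
    qed
    define c' where "c' = y' * of_nat p * S"
    have "u = (\<lambda>i. c' * rowv p x' y' i + shv p (cmul p a f') i)"
    proof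
      fix i
      show "u i = c' * rowv p x' y' i + shv p (cmul p a f') i"
      proof (cases "i = 0")
        case True
        have ux: "u 0 * x = - (S * y)" using r0 by (simp add: eq_neg_iff_add_eq_0)
        have "u 0 = u 0 * (x * x)" using H4(1) by simp
        also have "\<dots> = (u 0 * x) * x" by (simp add: algebra_simps)
        also have "\<dots> = S * (- (x * y))" unfolding ux by (simp add: algebra_simps)
        also have "\<dots> = c' * x'" unfolding H4(3) c'_def by (simp add: algebra_simps)
        finally show ?thesis using True by (simp add: rowv_def shv_def)
      next
        case False
        show ?thesis
        proof (cases "i \<le> p")
          case True
          then obtain m where m: "i = Suc m" "m < p" using False by (cases i) auto
          have "u i = a m" unfolding a_def m using m(2) by simp
          also have "\<dots> = cmul p a f' m + of_nat p * S" using as[OF m(2)] .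
          also have "\<dots> = c' * y' + cmul p a f' m"
          proof -
            have "c' * y' = (y' * y') * (of_nat p * S)" unfolding c'_def by (simp add: algebra_simps)
            thus ?thesis using H4(2) by simp
          qed
          finally show ?thesis using m by (simp add: rowv_def shv_def)
        next
          case False
          hence "u i = 0" using uv unfolding vecs_def by auto
          thus ?thesis using False by (simp add: rowv_def shv_def)
        qed
      qed
    qed
    thus "u \<in> Tset p x' y' f'" unfolding Tset_def using av by blast
  qed
next
  show "Tset p x' y' f' \<subseteq> edual (p+1) (Tset p x y f)"
  proof
    fix u assume "u \<in> Tset p x' y' f'"
    then obtain c' g' where u: "u = (\<lambda>i. c' * rowv p x' y' i + shv p (cmul p g' f') i)" "g' \<in> vecs p"
      unfolding Tset_def by blast
    have uv: "u \<in> vecs (p+1)" unfolding u vecs_def rowv_def shv_def by auto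
    have "(\<Sum>i<p+1. u i * w i) = 0" if w: "w \<in> Tset p x y f" for w
    proof -
      obtain c g where wg: "w = (\<lambda>i. c * rowv p x y i + shv p (cmul p g f) i)" "g \<in> vecs p"
        using w unfolding Tset_def by blast
      let ?h = "cmul p g f" and ?h' = "cmul p g' f'"
      have sh: "(\<Sum>m<p. ?h m) = 0" using sum_cmul H3 by simp
      have sh': "(\<Sum>m<p. ?h' m) = 0" using sum_cmul H3 by simp
      have o: "(\<Sum>m<p. ?h' m * ?h m) = 0" using orth[OF H1 H2 H3(2)] .
      have "(\<Sum>i<p+1. u i * w i) = c' * x' * (c * x) + (\<Sum>m<p. (c' * y' + ?h' m) * (c * y + ?h m))"
        unfolding sum_Suc_p u wg by (simp add: rowv_def shv_def)
      also have "(\<Sum>m<p. (c' * y' + ?h' m) * (c * y + ?h m)) =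
          of_nat p * (c' * y' * (c * y)) + c' * y' * (\<Sum>m<p. ?h m) + c * y * (\<Sum>m<p. ?h' m) + (\<Sum>m<p. ?h' m * ?h m)"
        by (simp add: algebra_simps sum.distrib sum_distrib_left)
      finally have "(\<Sum>i<p+1. u i * w i) = c' * c * (x * x' + of_nat p * (y * y'))"
        using sh sh' o by (simp add: algebra_simps)
      thus ?thesis using H4(4) by simp
    qed
    thus "u \<in> edual (p+1) (Tset p x y f)" unfolding edual_def using uv by blast
  qed
qed

end


lemma of_nat_R: "(of_nat n :: R) = RR (of_nat n) 0"
  by (induction n) (simp_all add: zero_R_def one_R_def)

lemma numeral_R: "(numeral n :: R) = RR (numeral n) 0"
  using of_nat_R[of "numeral n"] by simp

lemma four4: "(4::4) = 0" by simp

lemma of_nat_4n: "(of_nat (4 * n) :: R) = 0"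
  unfolding of_nat_R by (simp add: zero_R_def four4)

lemma of_nat_2r: "(of_nat (2 * r) :: R) = (if odd r then 2 else 0)"
proof (cases "odd r")
  case True
  then obtain m where "r = 2*m+1" by (metis oddE)
  hence "2 * r = 4 * m + 2" by simp
  thus ?thesis using True of_nat_4n[of m] by simp
next
  case False
  then obtain m where "r = 2*m" by (metis evenE)
  hence "2 * r = 4 * m" by simp
  thus ?thesis using False of_nat_4n[of m] by simp
qed

lemma two_minus_one: "(2::R) - 1 = 1" by (simp add: numeral_R one_R_def)

context qrp begin

lemma params7:
  assumes h: "p mod 8 = 7"
  shows "\<not> q1" "(of_nat p :: R) = -1" "(of_nat kk :: R) = -1"
    "xR = (if odd (qr_r p) then 1 else -1)" "yR = (if odd (qr_r p) then 1 else -1)"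
    "zR = (if odd (qr_r p) then 2 else 0)" "s0 = 0" "t0 = -1"
proof -
  define r where "r = qr_r p"
  have pr: "p + 1 = 8 * r" unfolding r_def qr_r_def using h by (simp, presburger)
  have k4: "kk + 1 = 4 * r" using pr p_eq by linarith
  show nq: "\<not> q1" using qr_neg1[OF prime gt2] h by presburger
  have "(of_nat (p + 1) :: R) = 0" unfolding pr using of_nat_4n[of "2*r"] by (simp add: mult.assoc)
  thus pR: "(of_nat p :: R) = -1" by (simp add: eq_neg_iff_add_eq_0 add.commute)
  have "(of_nat (kk + 1) :: R) = 0" unfolding k4 by (rule of_nat_4n)
  thus kR: "(of_nat kk :: R) = -1" by (simp add: eq_neg_iff_add_eq_0 add.commute)
  have xs: "X True True + X True False + 1 = kk" "X True False + X False False = kk" "2 * X True False + 1 = kk"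
    using Xsolve nq by auto
  have y1: "X True False + 1 = 2 * r" using xs k4 by linarith
  have xy: "X True True = X True False" using xs by linarith
  have z: "X False False = 2 * r" using xs k4 by linarith
  have "yR = of_nat (2 * r) - 1" unfolding y1[symmetric] by simp
  thus "yR = (if odd (qr_r p) then 1 else -1)" unfolding of_nat_2r r_def using two_minus_one by simp
  moreover have "xR = yR" using xy by simp
  ultimately show "xR = (if odd (qr_r p) then 1 else -1)" by simp
  show "zR = (if odd (qr_r p) then 2 else 0)" using z of_nat_2r r_def by simp
  show "s0 = 0" using nq by simp
  show "t0 = -1" using nq kR by simp
qed

lemma params1:
  assumes h: "p mod 8 = 1"
  shows "q1" "(of_nat p :: R) = 1" "(of_nat kk :: R) = 0"
    "xR = (if odd (qr_r p) then 1 else -1)" "yR = (if odd (qr_r p) then 2 else 0)"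
    "zR = (if odd (qr_r p) then 2 else 0)" "s0 = 0" "t0 = 0"
proof -
  define r where "r = qr_r p"
  have pr: "p = 8 * r + 1" unfolding r_def qr_r_def using h by (simp, presburger)
  have k4: "kk = 4 * r" using pr by simp
  show q: "q1" using qr_neg1[OF prime gt2] h by presburger
  show "(of_nat p :: R) = 1" unfolding pr using of_nat_4n[of "2*r"] by (simp add: mult.assoc)
  show kR: "(of_nat kk :: R) = 0" unfolding k4 by (rule of_nat_4n)
  have xs: "X True True + X True False + 1 = kk" "X True False + X False False = kk" "2 * X True False = kk"
    using Xsolve q by auto
  have y: "X True False = 2 * r" using xs k4 by linarith
  have x1: "X True True + 1 = 2 * r" using xs k4 by linarith
  have z: "X False False = 2 * r" using xs k4 by linarith
  show "yR = (if odd (qr_r p) then 2 else 0)" using y of_nat_2r r_def by simp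
  show "zR = (if odd (qr_r p) then 2 else 0)" using z of_nat_2r r_def by simp
  have "xR = of_nat (2 * r) - 1" unfolding x1[symmetric] by simp
  thus "xR = (if odd (qr_r p) then 1 else -1)" unfolding of_nat_2r r_def using two_minus_one by simp
  show "s0 = 0" using q kR by simp
  show "t0 = 0" using q by simp
qed

end


lemma vcomb_lin: "vcomb (lin p a b c) (lin p a' b' c') =
   lin p (vR*a + (1-vR)*a') (vR*b + (1-vR)*b') (vR*c + (1-vR)*c')"
  unfolding vcomb_def lin_def by (rule ext) (simp add: algebra_simps)

lemma pols_lin:
  "(\<lambda>j. Qpol p j + 2 * Npol p j) = lin p 0 1 2"
  "(\<lambda>j. Npol p j + 2 * Qpol p j) = lin p 0 2 1"
  "(\<lambda>j. onepol j - Npol p j + 2 * Qpol p j) = lin p 1 2 (-1)"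
  "(\<lambda>j. onepol j - Qpol p j + 2 * Npol p j) = lin p 1 (-1) 2"
  "(\<lambda>j. onepol j + Npol p j) = lin p 1 0 1"
  "(\<lambda>j. onepol j + Qpol p j) = lin p 1 1 0"
  "(\<lambda>j. - Qpol p j) = lin p 0 (-1) 0"
  "(\<lambda>j. - Npol p j) = lin p 0 0 (-1)"
  unfolding lin_def Qpol_ind Npol_ind by (rule ext; simp add: algebra_simps)+

context qrp begin

lemma lin_rhs: "i < p \<Longrightarrow> onepol i - lin p a b c i - d = lin p (1 - a - d) (- b - d) (- c - d) i"
proof -
  assume i: "i < p"
  have "i = 0 \<or> i \<in> cls p True \<or> i \<in> cls p False" using i cls_un by (metis insert_iff lessThan_iff UnE)
  moreover have "i \<noteq> 0 \<Longrightarrow> onepol i = 0" unfolding onepol_def by simp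
  ultimately show ?thesis using lin_vals cls_nz by (elim disjE) (auto simp: onepol_def)
qed

lemma key_lin:
  assumes m1: "a = 1 - a' - of_nat p" "(if q1 then b else c) = - b' - of_nat p" "(if q1 then c else b) = - c' - of_nat p"
    and id: "a'*a' + (b'*b' + c'*c') * s0 + (b'*c' + c'*b') * t0 = a'"
      "a'*b' + b'*a' + b'*b'*xR + c'*c'*zR + (b'*c' + c'*b')*yR = b'"
      "a'*c' + c'*a' + b'*b'*zR + c'*c'*xR + (b'*c' + c'*b')*yR = c'"
    and s: "a + of_nat kk * b + of_nat kk * c = 0" "a' + of_nat kk * b' + of_nat kk * c' = 0"
    and H4: "x*x = 1" "y'*y' = 1" "-(x*y) = x'*y'*of_nat p" "x*x' + of_nat p*(y*y') = 0"
  shows "edual (p+1) (Tset p x y (lin p a b c)) = Tset p x' y' (lin p a' b' c')"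
proof (rule key)
  show "\<forall>i<p. lin p a b c (md p (- int i)) = onepol i - lin p a' b' c' i - of_nat p"
  proof (intro allI impI)
    fix i assume i: "i < p"
    have "lin p a b c (md p (- int i)) = lin p a (if q1 then b else c) (if q1 then c else b) i" by (rule mu_lin[OF i])
    also have "\<dots> = lin p (1 - a' - of_nat p) (- b' - of_nat p) (- c' - of_nat p) i" using m1 by simp
    also have "\<dots> = onepol i - lin p a' b' c' i - of_nat p" by (rule lin_rhs[OF i, symmetric])
    finally show "lin p a b c (md p (- int i)) = onepol i - lin p a' b' c' i - of_nat p" .
  qed
  show "cmul p (lin p a' b' c') (lin p a' b' c') = lin p a' b' c'"
    unfolding cmul_lin id ..
  show "(\<Sum>i<p. lin p a b c i) = 0" "(\<Sum>i<p. lin p a' b' c' i) = 0" using s sum_lin by simp_all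
qed (use H4 in auto)

end



context qrp begin

lemma Egen7:
  assumes h: "p mod 8 = 7"
  shows "Egen p 1 = (if odd (qr_r p) then vcomb (lin p 1 2 (-1)) (lin p 1 (-1) 2) else vcomb (lin p 1 0 1) (lin p 1 1 0))"
    "Egen p 2 = (if odd (qr_r p) then vcomb (lin p 1 (-1) 2) (lin p 1 2 (-1)) else vcomb (lin p 1 1 0) (lin p 1 0 1))"
  unfolding Egen_def Let_def pols_lin using h by simp_all

lemma Egen1:
  assumes h: "p mod 8 = 1"
  shows "Egen p 1 = (if odd (qr_r p) then vcomb (lin p 0 1 2) (lin p 0 2 1) else vcomb (lin p 0 (-1) 0) (lin p 0 0 (-1)))"
    "Egen p 2 = (if odd (qr_r p) then vcomb (lin p 0 2 1) (lin p 0 1 2) else vcomb (lin p 0 0 (-1)) (lin p 0 (-1) 0))"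
  unfolding Egen_def Let_def pols_lin using h by simp_all

lemma neg4: "(-4::4) = 0" by simp

lemmas Rsimps = vR_def numeral_R one_R_def zero_R_def four4 neg4 of_nat_R

lemma case7:
  assumes h: "p mod 8 = 7" and xy: "(x = 3 \<and> y = 3) \<or> (x = 1 \<and> y = 3)" and i: "i = 1 \<or> i = 2"
  shows "edual (p+1) (Tset p x y (Egen p i)) = Tset p x y (Egen p i)"
proof (cases "odd (qr_r p)")
  case True
  show ?thesis using i xy apply -
    by (elim disjE conjE; (hypsubst+)?; (simp only: Egen7[OF h] vcomb_lin True if_True not_False_eq_True)?; rule key_lin; (simp only: params7[OF h] True if_True not_False_eq_True)?; simp add: Rsimps)
next
  case False
  show ?thesis using i xy apply -
    by (elim disjE conjE; (hypsubst+)?; (simp only: Egen7[OF h] vcomb_lin False if_False not_True_eq_False not_not)?; rule key_lin; (simp only: params7[OF h] False if_False not_True_eq_False not_not)?; simp add: Rsimps)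
qed

lemma case1:
  assumes h: "p mod 8 = 1" and i: "(i = 1 \<and> j = 2) \<or> (i = 2 \<and> j = 1)"
  shows "edual (p+1) (Tset p 3 1 (Egen p i)) = Tset p 1 1 (Egen p j)"
proof -
  have k0: "(of_nat ((p - Suc 0) div 2) :: R) = 0" using params1(3)[OF h] by simp
  have k04: "(of_nat ((p - Suc 0) div 2) :: 4) = 0" using k0 unfolding of_nat_R zero_R_def by simp
  show ?thesis
proof (cases "odd (qr_r p)")
  case True
  show ?thesis using i apply -
    by (elim disjE conjE; (hypsubst+)?; (simp only: Egen1[OF h] vcomb_lin True if_True not_False_eq_True)?; rule key_lin; (simp only: params1[OF h] k0 True if_True not_False_eq_True)?; simp add: Rsimps)
next
  case False
  show ?thesis using i apply -
    by (elim disjE conjE; (hypsubst+)?; (simp only: Egen1[OF h] vcomb_lin False if_False not_True_eq_False not_not)?; rule key_lin; (simp only: params1[OF h] k0 False if_False not_True_eq_False not_not)?; simp add: Rsimps k04)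
qed
qed

end

theorem theorem20:
  fixes p :: nat and G1 G2 :: "(nat \<Rightarrow> R) list"
  assumes "prime p" and "p mod 8 = 1 \<or> p mod 8 = 7"
    and "rspan (set G1) = Ecode p 1" and "rspan (set G2) = Ecode p 2"
  shows "(p mod 8 = 7 \<longrightarrow>
            self_dual (p + 1) (hatD p G1) \<and> self_dual (p + 1) (tildeD p G1) \<and>
            self_dual (p + 1) (hatD p G2) \<and> self_dual (p + 1) (tildeD p G2))
       \<and> (p mod 8 = 1 \<longrightarrow>
            edual (p + 1) (hatD p G1) = tildeD p G2 \<and>
            edual (p + 1) (hatD p G2) = tildeD p G1)"
proof -
  have p2: "2 < p"
  proof -
    have "2 \<le> p" using assms(1) prime_ge_2_nat by blast
    moreover have "p \<noteq> 2" using assms(2) by auto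
    ultimately show ?thesis by simp
  qed
  interpret qrp p by unfold_locales (rule assms(1), rule p2)
  have T1: "ext_code p x y G1 = Tset p x y (Egen p 1)" for x y
    by (rule ext_char) (use assms(3) in \<open>simp add: Ecode_def\<close>)
  have T2: "ext_code p x y G2 = Tset p x y (Egen p 2)" for x y
    by (rule ext_char) (use assms(4) in \<open>simp add: Ecode_def\<close>)
  show ?thesis
  proof (intro conjI impI)
    assume h: "p mod 8 = 7"
    show "self_dual (p + 1) (hatD p G1)" unfolding self_dual_def hatD_def using h T1 case7[OF h, of 3 3 1] by simp
    show "self_dual (p + 1) (tildeD p G1)" unfolding self_dual_def tildeD_def using h T1 case7[OF h, of 1 3 1] by simp
    show "self_dual (p + 1) (hatD p G2)" unfolding self_dual_def hatD_def using h T2 case7[OF h, of 3 3 2] by simp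
    show "self_dual (p + 1) (tildeD p G2)" unfolding self_dual_def tildeD_def using h T2 case7[OF h, of 1 3 2] by simp
  next
    assume h: "p mod 8 = 1"
    show "edual (p + 1) (hatD p G1) = tildeD p G2" unfolding hatD_def tildeD_def using h T1 T2 case1[OF h, of 1 2] by simp
    show "edual (p + 1) (hatD p G2) = tildeD p G1" unfolding hatD_def tildeD_def using h T1 T2 case1[OF h, of 2 1] by simp
  qed
qed


end
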